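(* Let ${\bf p}=({\bf p}_1,\dots,{\bf p}_n)$ and ${\bf q}=({\bf q}_1,\dots,{\bf q}_m)$ be configurations in $\mathbb R^d$ such that the affine span of ${\bf p}$ is $\mathbb R^d$ and the affine span of ${\bf q}$ is $\mathbb R^d$. (a) If the framework $(K(n,m),{\bf p},{\bf q})$ has an equilibrium stress whose stress matrix $\Omega$ is positive semidefinite of rank $n+m-d-1$, then $(K(n,m),{\bf p},{\bf q})$ is super stable and universally rigid. (b) If $(K(n,m),{\bf p},{\bf q})$ is dimensionally rigid, then it is universally rigid.
   Context: $(K(n,m),{\bf p},{\bf q})$ is the framework with bars joining ${\bf p}_i$ to ${\bf q}_j$ for all $i,j$ (vertices indexed $1,\dots,N$, $N=n+m$). An equilibrium stress of a framework $(G,{\bf p})$ is an assignment of scalars $\omega_{ij}=\omega_{ji}$ to the edges ($\omega_{ij}=0$ for non-edges) with $\sum_i\omega_{ij}({\bf p}_i-{\bf p}_j)=0$ for every vertex $j$; its stress matrix $\Omega$ is the $N\times N$ symmetric matrix with off-diagonal entries $-\omega_{ij}$ and diagonal entries chosen so all row sums are zero. A framework is universally rigid if every configuration in any $\mathbb R^D$ with the same edge lengths has all pairwise distances equal to those of the original. A framework whose affine span has dimension $d'$ is dimensionally rigid if every configuration in any $\mathbb R^D$ with the same edge lengths has affine span of dimension at most $d'$. Nonzero vectors ${\bf v}_1,\dots,{\bf v}_k\in\mathbb R^d$ lie on a conic at infinity if there is a nonzero symmetric $d\times d$ matrix $Q$ with ${\bf v}_i^tQ{\bf v}_i=0$ for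 all $i$. A framework with $N$ vertices whose affine span is $\mathbb R^d$ is super stable if it has an equilibrium stress with positive semidefinite stress matrix of rank $N-d-1$ and its edge vectors ${\bf p}_i-{\bf p}_j$ do not lie on a conic at infinity. *)

theory Defs
  imports "HOL-Analysis.Analysis" "Jordan_Normal_Form.DL_Rank"
begin

text \<open>Frameworks on the vertex set {0..<N} (vertex i of the paper is i-1 here),
  with an edge predicate E and a configuration P.\<close>

definition bip_edge :: "nat \<Rightarrow> nat \<Rightarrow> nat \<Rightarrow> nat \<Rightarrow> bool" where
  "bip_edge n m i j \<longleftrightarrow> (i < n \<and> n \<le> j \<and> j < n + m) \<or> (j < n \<and> n \<le> i \<and> i < n + m)"

definition bip_conf :: "nat \<Rightarrow> (nat \<Rightarrow> 'a) \<Rightarrow> (nat \<Rightarrow> 'a) \<Rightarrow> nat \<Rightarrow> 'a" where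
  "bip_conf n p q i = (if i < n then p i else q (i - n))"

definition is_equilibrium_stress ::
  "nat \<Rightarrow> (nat \<Rightarrow> nat \<Rightarrow> bool) \<Rightarrow> (nat \<Rightarrow> 'a::real_vector) \<Rightarrow> (nat \<Rightarrow> nat \<Rightarrow> real) \<Rightarrow> bool" where
  "is_equilibrium_stress N E P \<omega> \<longleftrightarrow>
     (\<forall>i<N. \<forall>j<N. \<omega> i j = \<omega> j i) \<and>
     (\<forall>i<N. \<forall>j<N. \<not> E i j \<longrightarrow> \<omega> i j = 0) \<and>
     (\<forall>j<N. (\<Sum>i<N. \<omega> i j *\<^sub>R (P i - P j)) = 0)"

definition stress_matrix :: "nat \<Rightarrow> (nat \<Rightarrow> nat \<Rightarrow> real) \<Rightarrow> real mat" where
  "stress_matrix N \<omega> =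
     mat N N (\<lambda>(i, j). if i = j then (\<Sum>k\<in>{..<N} - {i}. \<omega> i k) else - \<omega> i j)"

definition psd_mat :: "nat \<Rightarrow> real mat \<Rightarrow> bool" where
  "psd_mat N A \<longleftrightarrow> A \<in> carrier_mat N N \<and>
     (\<forall>i<N. \<forall>j<N. A $$ (i, j) = A $$ (j, i)) \<and>
     (\<forall>x :: nat \<Rightarrow> real. 0 \<le> (\<Sum>i<N. \<Sum>j<N. x i * A $$ (i, j) * x j))"

definition on_conic_at_infinity :: "(real^'d) set \<Rightarrow> bool" where
  "on_conic_at_infinity V \<longleftrightarrow>
     (\<exists>Q :: real^'d^'d. Q \<noteq> 0 \<and> transpose Q = Q \<and> (\<forall>v\<in>V. v \<bullet> (Q *v v) = 0))"

definition super_stable :: "nat \<Rightarrow> (nat \<Rightarrow> nat \<Rightarrow> bool) \<Rightarrow> (nat \<Rightarrow> real^'d) \<Rightarrow> bool" where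
  "super_stable N E P \<longleftrightarrow>
     affine hull (P ` {..<N}) = UNIV \<and>
     (\<exists>\<omega>. is_equilibrium_stress N E P \<omega> \<and> psd_mat N (stress_matrix N \<omega>) \<and>
          vec_space.rank N (stress_matrix N \<omega>) = N - CARD('d) - 1) \<and>
     \<not> on_conic_at_infinity {P i - P j | i j. i < N \<and> j < N \<and> E i j \<and> P i \<noteq> P j}"

text \<open>Points of R^D are represented as functions nat => real, of which only the
  coordinates 0..<D are used.\<close>
definition sqd :: "nat \<Rightarrow> (nat \<Rightarrow> real) \<Rightarrow> (nat \<Rightarrow> real) \<Rightarrow> real" where
  "sqd D x y = (\<Sum>k<D. (x k - y k)^2)"

definition universally_rigid :: "nat \<Rightarrow> (nat \<Rightarrow> nat \<Rightarrow> bool) \<Rightarrow> (nat \<Rightarrow> 'a::real_normed_vector) \<Rightarrow> bool" where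
  "universally_rigid N E P \<longleftrightarrow>
     (\<forall>(D::nat) (x :: nat \<Rightarrow> nat \<Rightarrow> real).
        (\<forall>i<N. \<forall>j<N. E i j \<longrightarrow> sqd D (x i) (x j) = (norm (P i - P j))^2) \<longrightarrow>
        (\<forall>i<N. \<forall>j<N. sqd D (x i) (x j) = (norm (P i - P j))^2))"

text \<open>Dimension of the affine span of x_0,...,x_{N-1} in R^D: the dimension of the span
  of x_i - x_0, i.e. the rank of the D x N matrix with these columns (-1 if N = 0).\<close>
definition conf_aff_dim :: "nat \<Rightarrow> nat \<Rightarrow> (nat \<Rightarrow> nat \<Rightarrow> real) \<Rightarrow> int" where
  "conf_aff_dim D N x =
     (if N = 0 then -1 else int (vec_space.rank D (mat D N (\<lambda>(k, i). x i k - x 0 k))))"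

definition dimensionally_rigid :: "nat \<Rightarrow> (nat \<Rightarrow> nat \<Rightarrow> bool) \<Rightarrow> (nat \<Rightarrow> 'a::euclidean_space) \<Rightarrow> bool" where
  "dimensionally_rigid N E P \<longleftrightarrow>
     (\<forall>(D::nat) (x :: nat \<Rightarrow> nat \<Rightarrow> real).
        (\<forall>i<N. \<forall>j<N. E i j \<longrightarrow> sqd D (x i) (x j) = (norm (P i - P j))^2) \<longrightarrow>
        conf_aff_dim D N x \<le> aff_dim (P ` {..<N}))"

end

theory Submission
  imports Defs
begin

lemma aff_zero:
  fixes \<alpha> :: "'a::euclidean_space"
  assumes "affine hull S = UNIV" "\<forall>y\<in>S. \<alpha> \<bullet> y = c"
  shows "\<alpha> = 0 \<and> c = 0"
proof -
  have "S \<subseteq> {y. \<alpha> \<bullet> y = c}" using assms(2) by auto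
  hence "affine hull S \<subseteq> {y. \<alpha> \<bullet> y = c}" by (rule hull_minimal) (rule affine_hyperplane)
  hence all: "\<And>y. \<alpha> \<bullet> y = c" using assms(1) by auto
  have c: "c = 0" using all[of 0] by simp
  have "\<alpha> \<bullet> \<alpha> = 0" using all[of \<alpha>] c by simp
  thus ?thesis using c by simp
qed

lemma mv_row: "(Q *v (v::real^'n)) $ r = (Q $ r) \<bullet> v"
  by (simp add: matrix_vector_mult_def inner_vec_def mult.commute)

lemma sym_form:
  fixes Q :: "real^'d^'d"
  assumes "transpose Q = Q"
  shows "u \<bullet> (Q *v w) = w \<bullet> (Q *v u)"
proof -
  have "u \<bullet> (Q *v w) = (u v* Q) \<bullet> w" by (simp add: dot_lmul_matrix)
  also have "\<dots> = (u v* transpose Q) \<bullet> w" using assms by simp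
  also have "\<dots> = w \<bullet> (Q *v u)" by (simp add: inner_commute)
  finally show ?thesis .
qed

lemma noconic:
  fixes p q :: "nat \<Rightarrow> real^'d" and Q :: "real^'d^'d"
  assumes hp: "affine hull (p ` {..<n}) = UNIV"
    and hq: "affine hull (q ` {..<m}) = UNIV"
    and sym: "transpose Q = Q"
    and E: "\<forall>i<n. \<forall>j<m. (p i - q j) \<bullet> (Q *v (p i - q j)) = 0"
  shows "Q = 0"
proof -
  define B where "B u w = u \<bullet> (Q *v w)" for u w :: "real^'d"
  have Bs: "B u w = B w u" for u w unfolding B_def using sym_form[OF sym] by blast
  have Bexp: "B (u - w) (u - w) = B u u - 2 * B u w + B w w" for u w
    using Bs[of u w] unfolding B_def by (simp add: algebra_simps inner_diff_left inner_diff_right)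
  have Bdl: "B (u - w) z = B u z - B w z" for u w z unfolding B_def by (simp add: inner_diff_left)
  have Bdr: "B z (u - w) = B z u - B z w" for u w z unfolding B_def by (simp add: algebra_simps inner_diff_right)
  have n0: "0 < n" using hp by (cases n) auto
  have m0: "0 < m" using hq by (cases m) auto
  have s1: "B (p i - p 0) (q j - q j') = 0" if "i < n" "j < m" "j' < m" for i j j'
  proof -
    have "B (p i - q j) (p i - q j) = 0" "B (p i - q j') (p i - q j') = 0"
         "B (p 0 - q j) (p 0 - q j) = 0" "B (p 0 - q j') (p 0 - q j') = 0"
      using E that n0 unfolding B_def by auto
    thus ?thesis unfolding Bexp Bdl Bdr using Bs[of "q j" "p i"] Bs[of "q j'" "p i"]
        Bs[of "q j" "p 0"] Bs[of "q j'" "p 0"] by (simp add: algebra_simps)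
  qed
  have s2: "Q *v (q j - q j') = 0" if "j < m" "j' < m" for j j'
  proof -
    have "\<forall>y\<in>p ` {..<n}. (Q *v (q j - q j')) \<bullet> y = (Q *v (q j - q j')) \<bullet> p 0"
    proof
      fix y assume "y \<in> p ` {..<n}"
      then obtain i where i: "i < n" "y = p i" by auto
      have "B (p i - p 0) (q j - q j') = 0" using s1 i that by auto
      thus "(Q *v (q j - q j')) \<bullet> y = (Q *v (q j - q j')) \<bullet> p 0"
        unfolding B_def i by (simp add: inner_diff_left inner_commute)
    qed
    thus ?thesis using aff_zero[OF hp] by blast
  qed
  have "Q $ r = 0" for r
  proof -
    have "\<forall>y\<in>q ` {..<m}. Q $ r \<bullet> y = Q $ r \<bullet> q 0"
    proof
      fix y assume "y \<in> q ` {..<m}"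
      then obtain j where j: "j < m" "y = q j" by auto
      have "(Q *v (q j - q 0)) $ r = 0" using s2[of j 0] j m0 by simp
      thus "Q $ r \<bullet> y = Q $ r \<bullet> q 0" unfolding mv_row j by (simp add: inner_diff_right)
    qed
    thus ?thesis using aff_zero[OF hq] by blast
  qed
  thus ?thesis by (simp add: Finite_Cartesian_Product.vec_eq_iff)
qed

lemma bipP1: "i < n \<Longrightarrow> bip_conf n p q i = p i" by (simp add: bip_conf_def)
lemma bipP2: "bip_conf n p q (n + j) = q j" by (simp add: bip_conf_def)

lemma bip_hull:
  fixes p q :: "nat \<Rightarrow> 'a::real_vector"
  assumes "affine hull (p ` {..<n}) = UNIV"
  shows "affine hull (bip_conf n p q ` {..<n+m}) = UNIV"
proof -
  have "p ` {..<n} \<subseteq> bip_conf n p q ` {..<n+m}"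
    by (auto simp: bip_conf_def image_iff intro!: bexI[where x="_::nat"])
  hence "affine hull (p ` {..<n}) \<subseteq> affine hull (bip_conf n p q ` {..<n+m})" by (rule hull_mono)
  thus ?thesis using assms by auto
qed

lemma bip_edge_pq: "i < n \<Longrightarrow> j < m \<Longrightarrow> bip_edge n m i (n + j)"
  by (simp add: bip_edge_def)

lemma not_conic:
  fixes p q :: "nat \<Rightarrow> real^'d"
  assumes hp: "affine hull (p ` {..<n}) = UNIV"
    and hq: "affine hull (q ` {..<m}) = UNIV"
  shows "\<not> on_conic_at_infinity {bip_conf n p q i - bip_conf n p q j | i j. i < n + m \<and> j < n + m \<and>
      bip_edge n m i j \<and> bip_conf n p q i \<noteq> bip_conf n p q j}"
proof
  assume "on_conic_at_infinity {bip_conf n p q i - bip_conf n p q j | i j. i < n + m \<and> j < n + m \<and>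
      bip_edge n m i j \<and> bip_conf n p q i \<noteq> bip_conf n p q j}"
  then obtain Q :: "real^'d^'d" where Q: "Q \<noteq> 0" "transpose Q = Q"
    and V: "\<forall>v\<in>{bip_conf n p q i - bip_conf n p q j | i j. i < n + m \<and> j < n + m \<and>
      bip_edge n m i j \<and> bip_conf n p q i \<noteq> bip_conf n p q j}. v \<bullet> (Q *v v) = 0"
    unfolding on_conic_at_infinity_def by blast
  have "\<forall>i<n. \<forall>j<m. (p i - q j) \<bullet> (Q *v (p i - q j)) = 0"
  proof (intro allI impI)
    fix i j assume ij: "i < n" "j < m"
    show "(p i - q j) \<bullet> (Q *v (p i - q j)) = 0"
    proof (cases "p i = q j")
      case True thus ?thesis by simp
    next
      case False
      have "p i - q j \<in> {bip_conf n p q i - bip_conf n p q j | i j. i < n + m \<and> j < n + m \<and>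
        bip_edge n m i j \<and> bip_conf n p q i \<noteq> bip_conf n p q j}"
        using ij False bip_edge_pq[OF ij] bipP1[OF ij(1), of p q] bipP2[of n p q j]
        by (intro CollectI exI[of _ i] exI[of _ "n+j"]) auto
      thus ?thesis using V by blast
    qed
  qed
  hence "Q = 0" using noconic[OF hp hq Q(2)] by blast
  thus False using Q(1) by simp
qed

lemma quad_sum:
  fixes b :: "nat \<Rightarrow> real^'d"
  shows "v \<bullet> ((\<chi> r s. \<Sum>k<D. b k $ r * b k $ s) *v v) = (\<Sum>k<D. (b k \<bullet> v)^2)"
proof -
  have 1: "v \<bullet> ((\<chi> r s. \<Sum>k<D. b k $ r * b k $ s) *v v) =
     (\<Sum>r\<in>UNIV. \<Sum>s\<in>UNIV. \<Sum>k<D. (b k $ r * v $ r) * (b k $ s * v $ s))"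
    by (simp add: inner_vec_def matrix_vector_mult_def sum_distrib_left sum_distrib_right mult_ac)
  have 2: "(\<Sum>k<D. (b k \<bullet> v)^2) =
     (\<Sum>k<D. \<Sum>r\<in>UNIV. \<Sum>s\<in>UNIV. (b k $ r * v $ r) * (b k $ s * v $ s))"
    by (simp add: inner_vec_def power2_eq_square sum_product)
  have 3: "(\<Sum>k<D. \<Sum>r\<in>UNIV. \<Sum>s\<in>UNIV. (b k $ r * v $ r) * (b k $ s * v $ s)) =
     (\<Sum>r\<in>UNIV. \<Sum>k<D. \<Sum>s\<in>UNIV. (b k $ r * v $ r) * (b k $ s * v $ s))"
    by (rule sum.swap)
  have 4: "(\<Sum>r\<in>UNIV. \<Sum>k<D. \<Sum>s\<in>UNIV. (b k $ r * v $ r) * (b k $ s * v $ s)) =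
     (\<Sum>r\<in>UNIV. \<Sum>s\<in>UNIV. \<Sum>k<D. (b k $ r * v $ r) * (b k $ s * v $ s))"
    by (rule sum.cong[OF refl], rule sum.swap)
  show ?thesis using 1 2 3 4 by simp
qed

lemma affine_cong:
  fixes p q :: "nat \<Rightarrow> real^'d" and x :: "nat \<Rightarrow> nat \<Rightarrow> real"
  assumes hp: "affine hull (p ` {..<n}) = UNIV"
    and hq: "affine hull (q ` {..<m}) = UNIV"
    and aff: "\<forall>k<D. \<exists>a b. \<forall>i<n+m. x i k = a + b \<bullet> bip_conf n p q i"
    and len: "\<forall>i<n+m. \<forall>j<n+m. bip_edge n m i j \<longrightarrow>
              sqd D (x i) (x j) = (norm (bip_conf n p q i - bip_conf n p q j))^2"
  shows "\<forall>i<n+m. \<forall>j<n+m. sqd D (x i) (x j) = (norm (bip_conf n p q i - bip_conf n p q j))^2"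
proof -
  define P where "P = bip_conf n p q"
  from aff obtain a b where ab: "\<forall>k<D. \<forall>i<n+m. x i k = a k + b k \<bullet> P i"
    unfolding P_def by metis
  have sq: "sqd D (x i) (x j) = (\<Sum>k<D. (b k \<bullet> (P i - P j))^2)" if "i < n+m" "j < n+m" for i j
    unfolding sqd_def using ab that by (intro sum.cong) (auto simp: inner_diff_right)
  define Q' :: "real^'d^'d" where "Q' = (\<chi> r s. \<Sum>k<D. b k $ r * b k $ s)"
  have Q'q: "v \<bullet> (Q' *v v) = (\<Sum>k<D. (b k \<bullet> v)^2)" for v unfolding Q'_def by (rule quad_sum)
  define Q where "Q = Q' - Finite_Cartesian_Product.mat 1"
  have tQ': "transpose Q' = Q'" unfolding Q'_def transpose_def
    by (simp add: Finite_Cartesian_Product.vec_eq_iff mult.commute)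
  have tQ: "transpose Q = Q" unfolding Q_def using tQ'
    by (simp add: Finite_Cartesian_Product.vec_eq_iff transpose_def Finite_Cartesian_Product.mat_def)
  have Qq: "v \<bullet> (Q *v v) = v \<bullet> (Q' *v v) - v \<bullet> v" for v
    unfolding Q_def by (simp add: matrix_vector_mult_diff_rdistrib inner_diff_right)
  have "\<forall>i<n. \<forall>j<m. (p i - q j) \<bullet> (Q *v (p i - q j)) = 0"
  proof (intro allI impI)
    fix i j assume ij: "i < n" "j < m"
    have e: "P i - P (n+j) = p i - q j" unfolding P_def using bipP1[OF ij(1)] bipP2 by metis
    have "sqd D (x i) (x (n+j)) = (norm (P i - P (n+j)))^2"
      using len bip_edge_pq[OF ij] ij unfolding P_def by auto
    hence "(\<Sum>k<D. (b k \<bullet> (p i - q j))^2) = (p i - q j) \<bullet> (p i - q j)"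
      using sq[of i "n+j"] ij e by (simp add: power2_norm_eq_inner)
    thus "(p i - q j) \<bullet> (Q *v (p i - q j)) = 0" unfolding Qq Q'q by simp
  qed
  hence "Q = 0" using noconic[OF hp hq tQ] by blast
  hence "Q' = Finite_Cartesian_Product.mat 1" unfolding Q_def by simp
  hence "\<forall>v. (\<Sum>k<D. (b k \<bullet> v)^2) = v \<bullet> v" using Q'q by simp
  thus ?thesis using sq unfolding P_def by (simp add: power2_norm_eq_inner)
qed

lemma rank_bound:
  fixes A :: "real mat" and v :: "'i \<Rightarrow> real vec" and I :: "'i set"
  assumes A: "A \<in> carrier_mat N N" and fI: "finite I"
    and vc: "\<forall>s\<in>I. v s \<in> carrier_vec N"
    and ker: "\<forall>s\<in>I. \<forall>j<N. (\<Sum>i<N. A $$ (i,j) * v s $ i) = 0"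
    and ind: "\<forall>c. (\<forall>r<N. (\<Sum>s\<in>I. c s * v s $ r) = 0) \<longrightarrow> (\<forall>s\<in>I. c s = 0)"
  shows "vec_space.rank N A + card I \<le> N"
proof -
  interpret vec_space "TYPE(real)" N .
  have li0: "lin_indpt {}" unfolding lin_dep_def by blast
  obtain S where S: "maximal S (\<lambda>T. T \<subseteq> set (cols A) \<and> lin_indpt T)" "finite S"
    using maximal_exists_superset[of "set (cols A)" "\<lambda>T. T \<subseteq> set (cols A) \<and> lin_indpt T" "{}"] li0
    by auto
  have rk: "rank A = card S" by (rule rank_card_indpt[OF A S(1)])
  have Ssub: "S \<subseteq> set (cols A)" and Sli: "lin_indpt S" using S(1) unfolding maximal_def by auto
  have Sc: "S \<subseteq> carrier_vec N" using Ssub A by (auto simp: cols_def)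
  have orth: "(\<Sum>i<N. v s $ i * w $ i) = 0" if sw: "s \<in> I" "w \<in> S" for s w
  proof -
    obtain j where j: "j < N" "w = col A j" using Ssub sw(2) A by (auto simp: cols_def)
    have "(\<Sum>i<N. v s $ i * w $ i) = (\<Sum>i<N. A $$ (i,j) * v s $ i)"
      using j A by (intro sum.cong) auto
    thus ?thesis using ker sw j by auto
  qed
  have inj: "inj_on v I"
  proof
    fix s s' assume ss: "s \<in> I" "s' \<in> I" "v s = v s'"
    show "s = s'"
    proof (rule ccontr)
      assume ne: "s \<noteq> s'"
      define c where "c t = (if t = s then 1 else if t = s' then -1 else (0::real))" for t
      have "\<forall>r<N. (\<Sum>t\<in>I. c t * v t $ r) = 0"
      proof (intro allI impI)
        fix r
        have "(\<Sum>t\<in>I. c t * v t $ r) = (\<Sum>t\<in>{s,s'}. c t * v t $ r)"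
          using ss fI by (intro sum.mono_neutral_right) (auto simp: c_def)
        also have "\<dots> = 0" using ne ss by (simp add: c_def)
        finally show "(\<Sum>t\<in>I. c t * v t $ r) = 0" .
      qed
      hence "c s = 0" using ind ss by blast
      thus False by (simp add: c_def)
    qed
  qed
  have nz: "\<exists>r<N. v s $ r \<noteq> 0" if "s \<in> I" for s
  proof (rule ccontr)
    assume "\<not> ?thesis"
    hence z: "\<forall>r<N. v s $ r = 0" by auto
    define c where "c t = (if t = s then 1 else (0::real))" for t
    have "\<forall>r<N. (\<Sum>t\<in>I. c t * v t $ r) = 0"
    proof (intro allI impI)
      fix r assume r: "r < N"
      have "(\<Sum>t\<in>I. c t * v t $ r) = (\<Sum>t\<in>{s}. c t * v t $ r)"
        using that fI by (intro sum.mono_neutral_right) (auto simp: c_def)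
      thus "(\<Sum>t\<in>I. c t * v t $ r) = 0" using z r by (simp add: c_def)
    qed
    hence "c s = 0" using ind that by blast
    thus False by (simp add: c_def)
  qed
  have disj: "v ` I \<inter> S = {}"
  proof (rule ccontr)
    assume "v ` I \<inter> S \<noteq> {}"
    then obtain s where s: "s \<in> I" "v s \<in> S" by auto
    have "(\<Sum>i<N. v s $ i * v s $ i) = 0" using orth[OF s] .
    hence "(\<Sum>i<N. (v s $ i)^2) = 0" by (simp add: power2_eq_square)
    hence "\<forall>i<N. (v s $ i)^2 = 0" by (subst (asm) sum_nonneg_eq_0_iff) auto
    thus False using nz[OF s(1)] by auto
  qed
  have IS: "v ` I \<union> S \<subseteq> carrier_vec N" using vc Sc by auto
  have li: "lin_indpt (v ` I \<union> S)"
  proof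
    assume "lin_dep (v ` I \<union> S)"
    then obtain B a w where B: "finite B" "B \<subseteq> v ` I \<union> S" "lincomb a B = 0\<^sub>v N" "w \<in> B" "a w \<noteq> 0"
      unfolding lin_dep_def by auto
    have Bc: "B \<subseteq> carrier_vec N" using B(2) IS by auto
    have co: "(\<Sum>z\<in>B. a z * z $ r) = 0" if "r < N" for r
      using lincomb_index[OF that Bc, of a] B(3) that by simp
    define B1 where "B1 = B \<inter> v ` I"
    define B2 where "B2 = B - v ` I"
    have B2S: "B2 \<subseteq> S" using B(2) unfolding B2_def by auto
    define Uf where "Uf r = (\<Sum>z\<in>B1. a z * z $ r)" for r
    define Wf where "Wf r = (\<Sum>z\<in>B2. a z * z $ r)" for r
    have UW: "Uf r + Wf r = 0" if "r < N" for r
      using co[OF that] sum.Int_Diff[OF B(1), of "\<lambda>z. a z * z $ r" "v ` I"]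
      unfolding Uf_def Wf_def B1_def B2_def by simp
    have B1I: "\<And>z. z \<in> B1 \<Longrightarrow> \<exists>s\<in>I. z = v s" unfolding B1_def by auto
    have fB1: "finite B1" "finite B2" using B(1) unfolding B1_def B2_def by auto
    have "(\<Sum>r<N. Uf r * Wf r) = (\<Sum>r<N. \<Sum>z1\<in>B1. \<Sum>z2\<in>B2. (a z1 * z1 $ r) * (a z2 * z2 $ r))"
      unfolding Uf_def Wf_def by (rule sum.cong[OF refl], rule sum_product)
    also have "\<dots> = (\<Sum>z1\<in>B1. \<Sum>r<N. \<Sum>z2\<in>B2. (a z1 * z1 $ r) * (a z2 * z2 $ r))"
      by (rule sum.swap)
    also have "\<dots> = (\<Sum>z1\<in>B1. \<Sum>z2\<in>B2. \<Sum>r<N. (a z1 * z1 $ r) * (a z2 * z2 $ r))"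
      by (rule sum.cong[OF refl], rule sum.swap)
    also have "\<dots> = 0"
    proof (rule sum.neutral, intro ballI, rule sum.neutral, intro ballI)
      fix z1 z2 assume z: "z1 \<in> B1" "z2 \<in> B2"
      obtain s where s: "s \<in> I" "z1 = v s" using B1I[OF z(1)] by auto
      have "(\<Sum>r<N. (a z1 * z1 $ r) * (a z2 * z2 $ r)) = (a z1 * a z2) * (\<Sum>r<N. z1 $ r * z2 $ r)"
        unfolding sum_distrib_left by (rule sum.cong[OF refl]) (simp only: ac_simps)
      also have "\<dots> = 0" using orth s z B2S by auto
      finally show "(\<Sum>r<N. (a z1 * z1 $ r) * (a z2 * z2 $ r)) = 0" .
    qed
    finally have UW0: "(\<Sum>r<N. Uf r * Wf r) = 0" .
    have "(\<Sum>r<N. Uf r * Wf r) = (\<Sum>r<N. (-1) * ((Uf r)^2))"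
    proof (rule sum.cong[OF refl])
      fix r assume "r \<in> {..<N}"
      hence "Wf r = - Uf r" using UW by force
      thus "Uf r * Wf r = (-1) * ((Uf r)^2)" by (simp add: power2_eq_square)
    qed
    hence "(\<Sum>r<N. (Uf r)^2) = - (\<Sum>r<N. Uf r * Wf r)" by (simp add: sum_negf)
    hence "(\<Sum>r<N. (Uf r)^2) = 0" using UW0 by simp
    hence U0: "\<forall>r<N. Uf r = 0" by (subst (asm) sum_nonneg_eq_0_iff) auto
    define c where "c s = (if v s \<in> B then a (v s) else 0)" for s
    have "\<forall>r<N. (\<Sum>s\<in>I. c s * v s $ r) = 0"
    proof (intro allI impI)
      fix r assume r: "r < N"
      have "(\<Sum>s\<in>I. c s * v s $ r) = (\<Sum>s\<in>{s\<in>I. v s \<in> B}. a (v s) * v s $ r)"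
        unfolding c_def sum.inter_filter[OF fI] by (rule sum.cong[OF refl]) simp
      also have "\<dots> = (\<Sum>z\<in>v ` {s\<in>I. v s \<in> B}. a z * z $ r)"
        by (rule sum.reindex[symmetric, unfolded comp_def]) (rule inj_on_subset[OF inj], auto)
      also have "v ` {s\<in>I. v s \<in> B} = B1" unfolding B1_def by auto
      finally show "(\<Sum>s\<in>I. c s * v s $ r) = 0" using U0 r unfolding Uf_def by simp
    qed
    hence c0: "\<forall>s\<in>I. c s = 0" using ind by blast
    have aB1: "a z = 0" if zB: "z \<in> B1" for z
    proof -
      obtain s where "s \<in> I" "z = v s" using B1I[OF zB] by auto
      thus ?thesis using c0 zB unfolding c_def B1_def by auto
    qed
    have wB2: "w \<in> B2" using B(4,5) aB1 unfolding B1_def B2_def by auto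
    have W0: "Wf r = 0" if "r < N" for r using UW[OF that] U0 that by simp
    have B2c: "B2 \<subseteq> carrier_vec N" using B2S Sc by auto
    have "lincomb a B2 = 0\<^sub>v N"
    proof (rule eq_vecI)
      show "dim_vec (lincomb a B2) = dim_vec (0\<^sub>v N)"
        using lincomb_closed[OF B2c, of a] by auto
      fix i assume "i < dim_vec (0\<^sub>v N)"
      hence i: "i < N" by simp
      show "lincomb a B2 $ i = 0\<^sub>v N $ i"
        using lincomb_index[OF i B2c, of a] W0[OF i] i unfolding Wf_def by simp
    qed
    hence "lin_dep S" unfolding lin_dep_def using fB1(2) B2S wB2 B(5) by blast
    thus False using Sli by simp
  qed
  have "card (v ` I \<union> S) \<le> dim" by (rule li_le_dim(2)[OF fin_dim IS li])
  hence "card (v ` I \<union> S) \<le> N" by (simp add: dim_is_n)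
  moreover have "card (v ` I \<union> S) = card I + card S"
    using card_Un_disjoint[OF finite_imageI[OF fI] S(2) disj] card_image[OF inj] by simp
  ultimately show ?thesis using rk by simp
qed

lemma sum_option:
  fixes g :: "'a::finite option \<Rightarrow> 'b::comm_monoid_add"
  shows "(\<Sum>s\<in>UNIV. g s) = g None + (\<Sum>t\<in>UNIV. g (Some t))"
proof -
  have "(\<Sum>s\<in>UNIV. g s) = (\<Sum>s\<in>insert None (range Some). g s)" by (simp add: UNIV_option_conv[symmetric])
  also have "\<dots> = g None + (\<Sum>s\<in>range Some. g s)" by (subst sum.insert) auto
  also have "(\<Sum>s\<in>range Some. g s) = (\<Sum>t\<in>UNIV. g (Some t))" by (subst sum.reindex) auto
  finally show ?thesis .
qed

lemma card_option2: "card (UNIV :: 'a::finite option option set) = CARD('a) + 2"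
  by (simp add: card_UNIV_option)

lemma stress_carrier: "stress_matrix N \<omega> \<in> carrier_mat N N"
  by (simp add: stress_matrix_def)

lemma stress_index: "i < N \<Longrightarrow> j < N \<Longrightarrow> stress_matrix N \<omega> $$ (i,j) =
   (if i = j then (\<Sum>k\<in>{..<N} - {i}. \<omega> i k) else - \<omega> i j)"
  by (simp add: stress_matrix_def)

lemma stress_row:
  assumes j: "j < N"
  shows "(\<Sum>i<N. stress_matrix N \<omega> $$ (j,i) * f i) = (\<Sum>i<N. \<omega> j i * (f j - f i))"
proof -
  have "(\<Sum>i<N. stress_matrix N \<omega> $$ (j,i) * f i) =
     stress_matrix N \<omega> $$ (j,j) * f j + (\<Sum>i\<in>{..<N} - {j}. stress_matrix N \<omega> $$ (j,i) * f i)"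
    using j by (subst sum.remove[of _ j]) auto
  also have "\<dots> = (\<Sum>k\<in>{..<N} - {j}. \<omega> j k) * f j + (\<Sum>i\<in>{..<N} - {j}. - \<omega> j i * f i)"
    using j by (auto simp: stress_index intro!: sum.cong)
  also have "\<dots> = (\<Sum>i\<in>{..<N} - {j}. \<omega> j i * (f j - f i))"
    by (simp add: right_diff_distrib sum_subtractf sum_negf sum_distrib_left mult.commute)
  also have "\<dots> = (\<Sum>i<N. \<omega> j i * (f j - f i))"
    using j by (subst sum.remove[of "{..<N}" j]) auto
  finally show ?thesis .
qed

lemma stress_quad:
  assumes sym: "\<forall>i<N. \<forall>j<N. \<omega> i j = \<omega> j i"
  shows "2 * (\<Sum>i<N. f i * (\<Sum>j<N. stress_matrix N \<omega> $$ (i,j) * f j)) =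
         (\<Sum>i<N. \<Sum>j<N. \<omega> i j * (f i - f j)^2)"
proof -
  define S1 where "S1 = (\<Sum>i<N. \<Sum>j<N. \<omega> i j * (f i * (f i - f j)))"
  define S2 where "S2 = (\<Sum>i<N. \<Sum>j<N. \<omega> i j * (f j * (f j - f i)))"
  have L: "(\<Sum>i<N. f i * (\<Sum>j<N. stress_matrix N \<omega> $$ (i,j) * f j)) = S1"
    unfolding S1_def
  proof (intro sum.cong refl)
    fix i assume "i \<in> {..<N}"
    hence i: "i < N" by simp
    have "f i * (\<Sum>j<N. stress_matrix N \<omega> $$ (i,j) * f j) = f i * (\<Sum>j<N. \<omega> i j * (f i - f j))"
      by (simp only: stress_row[OF i])
    also have "\<dots> = (\<Sum>j<N. \<omega> i j * (f i * (f i - f j)))" by (simp add: sum_distrib_left mult_ac)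
    finally show "f i * (\<Sum>j<N. stress_matrix N \<omega> $$ (i,j) * f j) = (\<Sum>j<N. \<omega> i j * (f i * (f i - f j)))" .
  qed
  have "S2 = (\<Sum>j<N. \<Sum>i<N. \<omega> i j * (f j * (f j - f i)))" unfolding S2_def by (rule sum.swap)
  also have "\<dots> = S1" unfolding S1_def using sym by (intro sum.cong refl) auto
  finally have "S2 = S1" .
  moreover have "S1 + S2 = (\<Sum>i<N. \<Sum>j<N. \<omega> i j * (f i - f j)^2)"
    unfolding S1_def S2_def sum.distrib[symmetric]
    by (intro sum.cong refl) (simp add: algebra_simps power2_eq_square)
  ultimately show ?thesis using L by simp
qed

lemma psd_kernel:
  assumes psd: "psd_mat N A"
    and z: "(\<Sum>i<N. \<Sum>j<N. f i * A $$ (i,j) * f j) = 0"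
  shows "\<forall>j<N. (\<Sum>i<N. A $$ (j,i) * f i) = 0"
proof (rule ccontr)
  assume neg: "\<not> (\<forall>j<N. (\<Sum>i<N. A $$ (j,i) * f i) = 0)"
  define h where "h j = (\<Sum>i<N. A $$ (j,i) * f i)" for j
  have sym: "\<forall>i<N. \<forall>j<N. A $$ (i, j) = A $$ (j, i)" and nn: "\<And>x. 0 \<le> (\<Sum>i<N. \<Sum>j<N. x i * A $$ (i, j) * x j)"
    using psd unfolding psd_mat_def by auto
  define H where "H = (\<Sum>i<N. (h i)^2)"
  have Hpos: "H > 0"
  proof -
    obtain j where j: "j < N" "h j \<noteq> 0" using neg unfolding h_def by auto
    have a: "(h j)^2 > 0" using j by simp
    have b: "(h j)^2 \<le> H" unfolding H_def using j
      by (intro member_le_sum) auto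
    show ?thesis using a b by linarith
  qed
  define G where "G = (\<Sum>i<N. \<Sum>j<N. h i * A $$ (i,j) * h j)"
  have G0: "G \<ge> 0" unfolding G_def by (rule nn)
  define B where "B x y = (\<Sum>i<N. \<Sum>j<N. x i * A $$ (i,j) * y j)" for x y :: "nat \<Rightarrow> real"
  have Bfh: "B f h = H" "B h f = H"
  proof -
    have "B h f = (\<Sum>i<N. h i * h i)" unfolding B_def h_def
      by (intro sum.cong refl) (simp add: sum_distrib_left mult_ac)
    thus "B h f = H" unfolding H_def by (simp add: power2_eq_square)
    have "B f h = B h f" unfolding B_def
      by (subst sum.swap) (intro sum.cong refl, use sym in \<open>auto simp: mult_ac\<close>)
    thus "B f h = H" using \<open>B h f = H\<close> by simp
  qed
  define t where "t = H / (G + 1)"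
  have tpos: "t > 0" unfolding t_def using Hpos G0 by simp
  have "B (\<lambda>i. f i - t * h i) (\<lambda>i. f i - t * h i) = B f f - t * B f h - t * B h f + t^2 * B h h"
    unfolding B_def
    by (simp add: algebra_simps power2_eq_square sum.distrib sum_subtractf sum_distrib_left)
  also have "\<dots> = t * (t * G - 2 * H)" using z Bfh unfolding B_def G_def
    by (simp add: algebra_simps power2_eq_square)
  also have "\<dots> < 0"
  proof -
    have "t * G < H" unfolding t_def using Hpos G0 by (simp add: field_simps)
    thus ?thesis using tpos Hpos by (simp add: mult_pos_neg)
  qed
  finally show False using nn[of "\<lambda>i. f i - t * h i"] unfolding B_def by simp
qed

lemma qform_eq: "(\<Sum>i<N. \<Sum>j<N. f i * (A::real mat) $$ (i,j) * f j) = (\<Sum>i<N. f i * (\<Sum>j<N. A $$ (i,j) * f j))"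
  by (simp add: sum_distrib_left mult.assoc)

lemma norm_sq_coord: "(norm (v :: real^'d))^2 = (\<Sum>l\<in>UNIV. (v $ l)^2)"
  unfolding power2_norm_eq_inner by (simp add: inner_vec_def power2_eq_square)

lemma partA_UR:
  fixes p q :: "nat \<Rightarrow> real^'d"
  assumes hp: "affine hull (p ` {..<n}) = UNIV"
    and hq: "affine hull (q ` {..<m}) = UNIV"
    and eq: "is_equilibrium_stress (n+m) (bip_edge n m) (bip_conf n p q) \<omega>"
    and psd: "psd_mat (n+m) (stress_matrix (n+m) \<omega>)"
    and rk: "vec_space.rank (n+m) (stress_matrix (n+m) \<omega>) = n+m - CARD('d) - 1"
  shows "universally_rigid (n+m) (bip_edge n m) (bip_conf n p q)"
proof -
  define N where "N = n + m"
  define P where "P = bip_conf n p q"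
  define A where "A = stress_matrix N \<omega>"
  have hP: "affine hull (P ` {..<N}) = UNIV" unfolding P_def N_def by (rule bip_hull[OF hp])
  have eq': "is_equilibrium_stress N (bip_edge n m) P \<omega>" using eq unfolding N_def P_def .
  have symw: "\<forall>i<N. \<forall>j<N. \<omega> i j = \<omega> j i"
    using eq' unfolding is_equilibrium_stress_def by blast
  have nonedge: "\<forall>i<N. \<forall>j<N. \<not> bip_edge n m i j \<longrightarrow> \<omega> i j = 0"
    using eq' unfolding is_equilibrium_stress_def by blast
  have bal: "\<forall>j<N. (\<Sum>i<N. \<omega> i j *\<^sub>R (P i - P j)) = 0"
    using eq' unfolding is_equilibrium_stress_def by blast
  have psd': "psd_mat N A" using psd unfolding A_def N_def .
  have symA: "\<forall>i<N. \<forall>j<N. A $$ (i, j) = A $$ (j, i)"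
    using psd' unfolding psd_mat_def by blast
  have nn: "0 \<le> (\<Sum>i<N. \<Sum>j<N. x i * A $$ (i, j) * x j)" for x
    using psd' unfolding psd_mat_def by blast
  have Ac: "A \<in> carrier_mat N N" unfolding A_def by (rule stress_carrier)
  have kerP: "(\<Sum>i<N. A $$ (j,i) * P i $ l) = 0" if j: "j < N" for j l
  proof -
    have "(\<Sum>i<N. A $$ (j,i) * P i $ l) = (\<Sum>i<N. \<omega> j i * (P j $ l - P i $ l))"
      unfolding A_def by (rule stress_row[OF j])
    also have "\<dots> = - (\<Sum>i<N. (\<omega> i j *\<^sub>R (P i - P j)) $ l)"
      using symw j by (simp add: sum_negf[symmetric] algebra_simps)
    also have "\<dots> = - ((\<Sum>i<N. \<omega> i j *\<^sub>R (P i - P j)) $ l)" by simp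
    also have "\<dots> = 0" using bal j by simp
    finally show ?thesis .
  qed
  have quadP: "(\<Sum>i<N. \<Sum>j<N. \<omega> i j * (P i $ l - P j $ l)^2) = 0" for l
  proof -
    have "2 * (\<Sum>i<N. P i $ l * (\<Sum>j<N. A $$ (i,j) * P j $ l)) =
          (\<Sum>i<N. \<Sum>j<N. \<omega> i j * (P i $ l - P j $ l)^2)"
      unfolding A_def by (rule stress_quad[OF symw])
    moreover have "(\<Sum>i<N. P i $ l * (\<Sum>j<N. A $$ (i,j) * P j $ l)) = 0"
      using kerP by simp
    ultimately show ?thesis by simp
  qed
  have energyP: "(\<Sum>i<N. \<Sum>j<N. \<omega> i j * (norm (P i - P j))^2) = 0"
  proof -
    have "(\<Sum>i<N. \<Sum>j<N. \<omega> i j * (norm (P i - P j))^2) =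
          (\<Sum>i<N. \<Sum>j<N. \<Sum>l\<in>UNIV. \<omega> i j * (P i $ l - P j $ l)^2)"
      by (simp add: norm_sq_coord sum_distrib_left)
    also have "\<dots> = (\<Sum>i<N. \<Sum>l\<in>UNIV. \<Sum>j<N. \<omega> i j * (P i $ l - P j $ l)^2)"
      by (rule sum.cong[OF refl], rule sum.swap)
    also have "\<dots> = (\<Sum>l\<in>UNIV. \<Sum>i<N. \<Sum>j<N. \<omega> i j * (P i $ l - P j $ l)^2)"
      by (rule sum.swap)
    also have "\<dots> = 0" using quadP by simp
    finally show ?thesis .
  qed
  show ?thesis unfolding universally_rigid_def
  proof (rule allI, rule allI, rule impI)
    fix D and x :: "nat \<Rightarrow> nat \<Rightarrow> real"
    assume len: "\<forall>i<n+m. \<forall>j<n+m. bip_edge n m i j \<longrightarrow>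
       sqd D (x i) (x j) = (norm (bip_conf n p q i - bip_conf n p q j))\<^sup>2"
    have eqlen: "\<omega> i j * sqd D (x i) (x j) = \<omega> i j * (norm (P i - P j))^2" if "i < N" "j < N" for i j
      using len nonedge that unfolding N_def P_def by (cases "bip_edge n m i j") auto
    define Ek where "Ek k = (\<Sum>i<N. \<Sum>j<N. \<omega> i j * (x i k - x j k)^2)" for k
    have Ek2: "Ek k = 2 * (\<Sum>i<N. \<Sum>j<N. x i k * A $$ (i,j) * x j k)" for k
      unfolding Ek_def qform_eq A_def by (rule stress_quad[OF symw, symmetric])
    have Eknn: "0 \<le> Ek k" for k unfolding Ek2 using nn[of "\<lambda>i. x i k"] by simp
    have "(\<Sum>k<D. Ek k) = (\<Sum>i<N. \<Sum>j<N. \<Sum>k<D. \<omega> i j * (x i k - x j k)^2)"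
      unfolding Ek_def
      by (subst sum.swap, rule sum.cong[OF refl], rule sum.swap)
    also have "\<dots> = (\<Sum>i<N. \<Sum>j<N. \<omega> i j * sqd D (x i) (x j))"
      by (simp add: sqd_def sum_distrib_left)
    also have "\<dots> = (\<Sum>i<N. \<Sum>j<N. \<omega> i j * (norm (P i - P j))^2)"
      using eqlen by (intro sum.cong refl) auto
    also have "\<dots> = 0" by (rule energyP)
    finally have "(\<Sum>k<D. Ek k) = 0" .
    hence Ek0: "\<forall>k<D. Ek k = 0" using Eknn by (subst (asm) sum_nonneg_eq_0_iff) auto
    have kerX: "\<forall>j<N. (\<Sum>i<N. A $$ (j,i) * x i k) = 0" if k: "k < D" for k
      using Ek0 k by (intro psd_kernel[of N A "\<lambda>i. x i k"]) (auto simp: Ek2 psd')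
    have aff: "\<exists>a b. \<forall>i<N. x i k = a + b \<bullet> P i" if k: "k < D" for k
    proof (rule ccontr)
      assume na: "\<not> (\<exists>a b. \<forall>i<N. x i k = a + b \<bullet> P i)"
      define v :: "'d option option \<Rightarrow> real vec" where
        "v s = (case s of None \<Rightarrow> vec N (\<lambda>i. x i k) | Some None \<Rightarrow> vec N (\<lambda>i. 1)
                | Some (Some l) \<Rightarrow> vec N (\<lambda>i. P i $ l))" for s
      define g :: "'d option option \<Rightarrow> nat \<Rightarrow> real" where
        "g s = (case s of None \<Rightarrow> (\<lambda>i. x i k) | Some None \<Rightarrow> (\<lambda>i. 1)
                | Some (Some l) \<Rightarrow> (\<lambda>i. P i $ l))" for s
      have vg: "v s $ i = g s i" if "i < N" for s i
        using that unfolding v_def g_def by (cases s rule: option.exhaust; auto split: option.splits)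
      have vc: "\<forall>s\<in>UNIV. v s \<in> carrier_vec N"
        unfolding v_def by (auto split: option.splits)
      have ker: "\<forall>s\<in>UNIV. \<forall>j<N. (\<Sum>i<N. A $$ (i,j) * v s $ i) = 0"
      proof (intro ballI allI impI)
        fix s j assume j: "j < N"
        have "(\<Sum>i<N. A $$ (i,j) * v s $ i) = (\<Sum>i<N. A $$ (j,i) * g s i)"
          using symA j vg by (intro sum.cong refl) auto
        also have "\<dots> = 0"
        proof (cases s)
          case None thus ?thesis using kerX[OF k] j unfolding g_def by simp
        next
          case (Some t)
          show ?thesis
          proof (cases t)
            case None
            have "(\<Sum>i<N. A $$ (j,i) * 1) = (\<Sum>i<N. \<omega> j i * (1 - 1))"
              unfolding A_def by (rule stress_row[OF j])
            thus ?thesis using Some None unfolding g_def by simp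
          next
            case (Some l)
            thus ?thesis using \<open>s = Some t\<close> kerP[OF j, of l] unfolding g_def by simp
          qed
        qed
        finally show "(\<Sum>i<N. A $$ (i,j) * v s $ i) = 0" .
      qed
      have ind: "\<forall>c. (\<forall>r<N. (\<Sum>s\<in>UNIV. c s * v s $ r) = 0) \<longrightarrow> (\<forall>s\<in>UNIV. c s = 0)"
      proof (intro allI impI)
        fix c :: "'d option option \<Rightarrow> real"
        assume H: "\<forall>r<N. (\<Sum>s\<in>UNIV. c s * v s $ r) = 0"
        define \<alpha> :: "real^'d" where "\<alpha> = (\<chi> l. c (Some (Some l)))"
        have H2: "c None * x r k + (c (Some None) + \<alpha> \<bullet> P r) = 0" if r: "r < N" for r
        proof -
          have "(\<Sum>s\<in>UNIV. c s * v s $ r) = c None * x r k + (c (Some None) + \<alpha> \<bullet> P r)"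
            using r by (simp add: sum_option vg g_def \<alpha>_def inner_vec_def)
          thus ?thesis using H r by simp
        qed
        have cN: "c None = 0"
        proof (rule ccontr)
          assume cN: "c None \<noteq> 0"
          have "\<forall>i<N. x i k = - c (Some None) / c None + ((- 1 / c None) *\<^sub>R \<alpha>) \<bullet> P i"
          proof (intro allI impI)
            fix i assume "i < N"
            from H2[OF this] cN show "x i k = - c (Some None) / c None + ((- 1 / c None) *\<^sub>R \<alpha>) \<bullet> P i"
              by (simp add: field_simps)
          qed
          thus False using na by blast
        qed
        have "\<forall>y\<in>P ` {..<N}. \<alpha> \<bullet> y = - c (Some None)"
        proof
          fix y assume "y \<in> P ` {..<N}"
          then obtain r where r: "r < N" "y = P r" by auto
          from H2[OF r(1)] cN have "c (Some None) + \<alpha> \<bullet> P r = 0" by simp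
          hence "\<alpha> \<bullet> P r = - c (Some None)" by (metis add_eq_0_iff)
          thus "\<alpha> \<bullet> y = - c (Some None)" using r by simp
        qed
        from aff_zero[OF hP this] have a0: "\<alpha> = 0" "c (Some None) = 0" by auto
        show "\<forall>s\<in>UNIV. c s = 0"
        proof
          fix s show "c s = 0"
          proof (cases s)
            case None thus ?thesis using cN by simp
          next
            case (Some t) thus ?thesis
            proof (cases t)
              case None thus ?thesis using Some a0 by simp
            next
              case (Some l)
              have "\<alpha> $ l = 0" using a0 by simp
              thus ?thesis using Some \<open>s = Some t\<close> unfolding \<alpha>_def by simp
            qed
          qed
        qed
      qed
      have "vec_space.rank N A + card (UNIV :: 'd option option set) \<le> N"
        by (rule rank_bound[OF Ac finite vc ker ind])
      thus False using rk unfolding A_def N_def card_option2 by simp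
    qed
    show "\<forall>i<n+m. \<forall>j<n+m. sqd D (x i) (x j) = (norm (bip_conf n p q i - bip_conf n p q j))\<^sup>2"
    proof -
      have "\<forall>k<D. \<exists>a b. \<forall>i<n+m. x i k = a + b \<bullet> bip_conf n p q i"
        using aff unfolding N_def P_def by blast
      from affine_cong[OF hp hq this len] show ?thesis .
    qed
  qed
qed

lemma rank_lower:
  fixes M :: "real mat" and w :: "nat \<Rightarrow> real^'e" and \<pi> :: "real vec \<Rightarrow> real^'e"
  assumes M: "M \<in> carrier_mat R N"
    and wpi: "\<forall>i<N. w i = \<pi> (col M i)"
    and pilin: "\<forall>A a. finite A \<longrightarrow> A \<subseteq> carrier_vec R \<longrightarrow> (\<forall>t<R. (\<Sum>c\<in>A. a c * c $ t) = 0)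
                 \<longrightarrow> (\<Sum>c\<in>A. a c *\<^sub>R \<pi> c) = 0"
    and sp: "span (w ` {..<N}) = UNIV"
  shows "CARD('e) \<le> vec_space.rank R M"
proof -
  obtain B where B: "B \<subseteq> w ` {..<N}" "independent B" "w ` {..<N} \<subseteq> span B"
    using maximal_independent_subset[of "w ` {..<N}"] by blast
  have spB: "span B = UNIV"
    using span_mono[OF B(3)] sp by (simp add: span_span top.extremum_uniqueI)
  have cardB: "card B = CARD('e)"
    using dim_span_eq_card_independent[OF B(2)] spB by simp
  obtain I where I: "I \<subseteq> {..<N}" "inj_on w I" "B = w ` I"
    using B(1) subset_image_inj by metis
  define U where "U = col M ` I"
  have Ucols: "U \<subseteq> set (cols M)" using I(1) M unfolding U_def cols_def by auto
  have Uc: "U \<subseteq> carrier_vec R" using I(1) M unfolding U_def by auto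
  have injc: "inj_on (col M) I"
  proof
    fix i i' assume ii: "i \<in> I" "i' \<in> I" "col M i = col M i'"
    have "i < N" "i' < N" using ii I(1) by auto
    hence "w i = w i'" using wpi ii(3) by metis
    thus "i = i'" using I(2) \<open>i \<in> I\<close> \<open>i' \<in> I\<close> by (auto dest: inj_onD)
  qed
  have cardU: "card U = CARD('e)" unfolding U_def using card_image[OF injc] cardB I card_image[OF I(2)] by simp
  have injpi: "inj_on \<pi> U"
  proof
    fix u u' assume "u \<in> U" "u' \<in> U" "\<pi> u = \<pi> u'"
    then obtain i i' where ii: "i \<in> I" "i' \<in> I" "u = col M i" "u' = col M i'" unfolding U_def by auto
    have "i < N" "i' < N" using ii I(1) by auto
    hence "w i = w i'" using wpi ii \<open>\<pi> u = \<pi> u'\<close> by metis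
    hence "i = i'" using I(2) ii by (auto dest: inj_onD)
    thus "u = u'" using ii by simp
  qed
  have piU: "\<pi> ` U \<subseteq> B"
  proof
    fix v assume "v \<in> \<pi> ` U"
    then obtain i where i: "i \<in> I" "v = \<pi> (col M i)" unfolding U_def by auto
    have "i < N" using i I(1) by auto
    hence "v = w i" using wpi i by metis
    thus "v \<in> B" using i I(3) by auto
  qed
  have finB: "finite B" and indB: "\<forall>c. (\<Sum>v\<in>B. c v *\<^sub>R v) = 0 \<longrightarrow> (\<forall>v\<in>B. c v = 0)"
      using B(2) unfolding independent_explicit by auto
  interpret vec_space "TYPE(real)" R .
  have li: "lin_indpt U"
  proof
    assume "lin_dep U"
    then obtain A a z where A: "finite A" "A \<subseteq> U" "lincomb a A = 0\<^sub>v R" "z \<in> A" "a z \<noteq> 0"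
      unfolding lin_dep_def by auto
    have Ac: "A \<subseteq> carrier_vec R" using A(2) Uc by auto
    have co: "\<forall>t<R. (\<Sum>c\<in>A. a c * c $ t) = 0"
      using lincomb_index[OF _ Ac, of _ a] A(3) by simp
    have s0: "(\<Sum>c\<in>A. a c *\<^sub>R \<pi> c) = 0" using pilin A(1) Ac co by blast
    have injA: "inj_on \<pi> A" using inj_on_subset[OF injpi A(2)] .
    define cc where "cc v = (if v \<in> \<pi> ` A then a (inv_into A \<pi> v) else 0)" for v
    have piA: "\<pi> ` A \<subseteq> B" using piU A(2) by auto
    have "(\<Sum>v\<in>B. cc v *\<^sub>R v) = (\<Sum>v\<in>\<pi> ` A. cc v *\<^sub>R v)"
      using finB piA by (intro sum.mono_neutral_right) (auto simp: cc_def)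
    also have "\<dots> = (\<Sum>c\<in>A. cc (\<pi> c) *\<^sub>R \<pi> c)" by (rule sum.reindex[OF injA, unfolded comp_def])
    also have "\<dots> = (\<Sum>c\<in>A. a c *\<^sub>R \<pi> c)"
      using injA by (intro sum.cong refl) (auto simp: cc_def)
    also have "\<dots> = 0" by (rule s0)
    finally have "\<forall>v\<in>B. cc v = 0" using indB by blast
    hence "cc (\<pi> z) = 0" using piA A(4) by auto
    thus False using A(4,5) injA by (auto simp: cc_def)
  qed
  show ?thesis using rank_ge_card_indpt[OF M Ucols li] cardU by simp
qed

lemma partB:
  fixes p q :: "nat \<Rightarrow> real^'d"
  assumes hp: "affine hull (p ` {..<n}) = UNIV"
    and hq: "affine hull (q ` {..<m}) = UNIV"
    and dr: "dimensionally_rigid (n+m) (bip_edge n m) (bip_conf n p q)"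
  shows "universally_rigid (n+m) (bip_edge n m) (bip_conf n p q)"
proof -
  define N where "N = n + m"
  define P where "P = bip_conf n p q"
  define d where "d = CARD('d)"
  have hP: "affine hull (P ` {..<N}) = UNIV" unfolding P_def N_def by (rule bip_hull[OF hp])
  have n0: "0 < n" using hp by (cases n) auto
  have N0: "N \<noteq> 0" using n0 unfolding N_def by simp
  have affP: "aff_dim (P ` {..<N}) = int d"
    using aff_dim_affine_hull[of "P ` {..<N}"] hP unfolding d_def by simp
  obtain g where g: "bij_betw g {..<d} (UNIV::'d set)"
    using ex_bij_betw_nat_finite[of "UNIV::'d set"] unfolding d_def by (auto simp: atLeast0LessThan)
  define ginv where "ginv = inv_into {..<d} g"
  have ginv: "ginv l < d" "g (ginv l) = l" for l
    unfolding ginv_def using g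
    by (auto simp: bij_betw_def intro: inv_into_into[of l g "{..<d}", simplified] f_inv_into_f)
  have dr': "\<And>D' y. (\<forall>i<N. \<forall>j<N. bip_edge n m i j \<longrightarrow> sqd D' (y i) (y j) = (norm (P i - P j))^2)
     \<Longrightarrow> conf_aff_dim D' N y \<le> aff_dim (P ` {..<N})"
    using dr unfolding dimensionally_rigid_def N_def P_def by blast
  show ?thesis unfolding universally_rigid_def
  proof (rule allI, rule allI, rule impI)
    fix D and x :: "nat \<Rightarrow> nat \<Rightarrow> real"
    assume len: "\<forall>i<n+m. \<forall>j<n+m. bip_edge n m i j \<longrightarrow>
       sqd D (x i) (x j) = (norm (bip_conf n p q i - bip_conf n p q j))\<^sup>2"
    define y where "y i t = (if t < d then P i $ g t / sqrt 2 else x i (t - d) / sqrt 2)" for i t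
    have sqy: "sqd (d+D) (y i) (y j) = ((norm (P i - P j))^2 + sqd D (x i) (x j)) / 2" for i j
    proof -
      have "sqd (d+D) (y i) (y j) = (\<Sum>t<d. (y i t - y j t)^2) + (\<Sum>t\<in>{d..<d+D}. (y i t - y j t)^2)"
        unfolding sqd_def using sum.atLeastLessThan_concat[of 0 d "d+D" "\<lambda>t. (y i t - y j t)^2"] by (simp add: atLeast0LessThan)
      also have "(\<Sum>t<d. (y i t - y j t)^2) = (\<Sum>t<d. (P i $ g t - P j $ g t)^2) / 2"
        unfolding sum_divide_distrib
        by (intro sum.cong refl) (simp add: y_def power_divide diff_divide_distrib[symmetric])
      also have "(\<Sum>t<d. (P i $ g t - P j $ g t)^2) = (\<Sum>l\<in>UNIV. (P i $ l - P j $ l)^2)"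
        using sum.reindex_bij_betw[OF g, of "\<lambda>l. (P i $ l - P j $ l)^2"] by simp
      also have "\<dots> = (norm (P i - P j))^2" by (simp add: norm_sq_coord)
      also have "(\<Sum>t\<in>{d..<d+D}. (y i t - y j t)^2) = (\<Sum>t<D. (y i (t + d) - y j (t + d))^2)"
        using sum.shift_bounds_nat_ivl[of "\<lambda>t. (y i t - y j t)^2" 0 d D] by (simp add: atLeast0LessThan add.commute)
      also have "\<dots> = sqd D (x i) (x j) / 2"
        unfolding sqd_def sum_divide_distrib
        by (intro sum.cong refl) (simp add: y_def power_divide diff_divide_distrib[symmetric])
      finally show ?thesis by (simp add: add_divide_distrib)
    qed
    have "conf_aff_dim (d+D) N y \<le> aff_dim (P ` {..<N})"
    proof (rule dr', intro allI impI)
      fix i j assume ij: "i < N" "j < N" "bip_edge n m i j"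
      hence "sqd D (x i) (x j) = (norm (P i - P j))^2" using len unfolding N_def P_def by auto
      hence "sqd (d+D) (y i) (y j) = ((norm (P i - P j))^2 + (norm (P i - P j))^2) / 2"
        using sqy[of i j] by simp
      thus "sqd (d+D) (y i) (y j) = (norm (P i - P j))^2" by simp
    qed
    define M where "M = mat (d+D) N (\<lambda>(t, i). y i t - y 0 t)"
    have rkM: "vec_space.rank (d+D) M \<le> d"
      using \<open>conf_aff_dim (d+D) N y \<le> aff_dim (P ` {..<N})\<close> N0 affP
      unfolding conf_aff_dim_def M_def by simp
    have Mc: "M \<in> carrier_mat (d+D) N" unfolding M_def by simp
    have colM: "col M i $ t = y i t - y 0 t" if "i < N" "t < d+D" for i t
      using that Mc unfolding M_def by simp
    have aff: "\<exists>a b. \<forall>i<N. x i k = a + b \<bullet> P i" if k: "k < D" for k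
    proof (rule ccontr)
      assume na: "\<not> (\<exists>a b. \<forall>i<N. x i k = a + b \<bullet> P i)"
      define w :: "nat \<Rightarrow> real^('d option)" where
        "w i = (\<chi> ou. case ou of None \<Rightarrow> x i k - x 0 k | Some l \<Rightarrow> P i $ l - P 0 $ l)" for i
      define \<pi> :: "real vec \<Rightarrow> real^('d option)" where
        "\<pi> c = (\<chi> ou. case ou of None \<Rightarrow> sqrt 2 * c $ (d+k) | Some l \<Rightarrow> sqrt 2 * c $ (ginv l))" for c
      have wpi: "\<forall>i<N. w i = \<pi> (col M i)"
      proof (intro allI impI)
        fix i assume i: "i < N"
        have dk: "d + k < d + D" using k by simp
        have gl: "ginv l < d + D" for l using ginv(1)[of l] by simp
        show "w i = \<pi> (col M i)"
          unfolding Finite_Cartesian_Product.vec_eq_iff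
        proof
          fix ou show "w i $ ou = \<pi> (col M i) $ ou"
          proof (cases ou)
            case None thus ?thesis using colM[OF i dk]
              by (simp add: w_def \<pi>_def y_def right_diff_distrib)
          next
            case (Some l) thus ?thesis using colM[OF i gl[of l]] ginv[of l]
              by (simp add: w_def \<pi>_def y_def right_diff_distrib)
          qed
        qed
      qed
      have pilin: "\<forall>A a. finite A \<longrightarrow> A \<subseteq> carrier_vec (d+D) \<longrightarrow> (\<forall>t<d+D. (\<Sum>c\<in>A. a c * c $ t) = 0)
                 \<longrightarrow> (\<Sum>c\<in>A. a c *\<^sub>R \<pi> c) = 0"
      proof (intro allI impI)
        fix A and a :: "real vec \<Rightarrow> real"
        assume A: "finite A" "A \<subseteq> carrier_vec (d+D)" "\<forall>t<d+D. (\<Sum>c\<in>A. a c * c $ t) = 0"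
        show "(\<Sum>c\<in>A. a c *\<^sub>R \<pi> c) = 0"
          unfolding Finite_Cartesian_Product.vec_eq_iff
        proof
          fix ou
          have "(\<Sum>c\<in>A. a c *\<^sub>R \<pi> c) $ ou = (\<Sum>c\<in>A. a c * \<pi> c $ ou)" by simp
          also have "\<dots> = 0"
          proof (cases ou)
            case None
            have "(\<Sum>c\<in>A. a c * \<pi> c $ ou) = sqrt 2 * (\<Sum>c\<in>A. a c * c $ (d+k))"
              using None by (simp add: \<pi>_def sum_distrib_left mult_ac)
            thus ?thesis using A(3) k by simp
          next
            case (Some l)
            have "(\<Sum>c\<in>A. a c * \<pi> c $ ou) = sqrt 2 * (\<Sum>c\<in>A. a c * c $ (ginv l))"
              using Some by (simp add: \<pi>_def sum_distrib_left mult_ac)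
            thus ?thesis using A(3) ginv(1)[of l] by simp
          qed
          finally show "(\<Sum>c\<in>A. a c *\<^sub>R \<pi> c) $ ou = 0 $ ou" by simp
        qed
      qed
      have sp: "span (w ` {..<N}) = UNIV"
      proof (rule ccontr)
        assume "span (w ` {..<N}) \<noteq> UNIV"
        from span_not_UNIV_orthogonal[OF this] obtain a :: "real^('d option)"
          where a: "a \<noteq> 0" "\<forall>z\<in>span (w ` {..<N}). a \<bullet> z = 0" by blast
        define \<beta> where "\<beta> = a $ None"
        define \<alpha> :: "real^'d" where "\<alpha> = (\<chi> l. a $ Some l)"
        have eq: "\<beta> * (x i k - x 0 k) + \<alpha> \<bullet> (P i - P 0) = 0" if i: "i < N" for i
        proof -
          have "a \<bullet> w i = 0" using a(2) i by (auto intro: span_base)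
          moreover have "a \<bullet> w i = \<beta> * (x i k - x 0 k) + \<alpha> \<bullet> (P i - P 0)"
            by (simp add: inner_vec_def sum_option w_def \<beta>_def \<alpha>_def)
          ultimately show ?thesis by simp
        qed
        show False
        proof (cases "\<beta> = 0")
          case False
          have "\<forall>i<N. x i k = (x 0 k + (\<alpha> \<bullet> P 0) / \<beta>) + ((- 1 / \<beta>) *\<^sub>R \<alpha>) \<bullet> P i"
          proof (intro allI impI)
            fix i assume i: "i < N"
            from eq[OF i] False show "x i k = (x 0 k + (\<alpha> \<bullet> P 0) / \<beta>) + ((- 1 / \<beta>) *\<^sub>R \<alpha>) \<bullet> P i"
              by (simp add: inner_diff_right field_simps) (simp add: distrib_left[symmetric])
          qed
          thus False using na by blast
        next
          case True
          have "\<forall>z\<in>P ` {..<N}. \<alpha> \<bullet> z = \<alpha> \<bullet> P 0"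
          proof
            fix z assume "z \<in> P ` {..<N}"
            then obtain i where i: "i < N" "z = P i" by auto
            from eq[OF i(1)] True show "\<alpha> \<bullet> z = \<alpha> \<bullet> P 0" using i by (simp add: inner_diff_right)
          qed
          from aff_zero[OF hP this] have "\<alpha> = 0" by blast
          hence "a = 0" using True unfolding \<alpha>_def \<beta>_def Finite_Cartesian_Product.vec_eq_iff
            by (metis (no_types, lifting) option.exhaust vec_lambda_beta zero_index)
          thus False using a(1) by simp
        qed
      qed
      have "CARD('d option) \<le> vec_space.rank (d+D) M"
        by (rule rank_lower[OF Mc wpi pilin sp])
      thus False using rkM unfolding d_def by (simp add: card_UNIV_option)
    qed
    show "\<forall>i<n+m. \<forall>j<n+m. sqd D (x i) (x j) = (norm (bip_conf n p q i - bip_conf n p q j))\<^sup>2"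
    proof -
      have "\<forall>k<D. \<exists>a b. \<forall>i<n+m. x i k = a + b \<bullet> bip_conf n p q i"
        using aff unfolding N_def P_def by blast
      from affine_cong[OF hp hq this len] show ?thesis .
    qed
  qed
qed


theorem mainTheorem3:
  fixes p q :: "nat \<Rightarrow> real^'d" and n m :: nat
  assumes "affine hull (p ` {..<n}) = UNIV"
    and "affine hull (q ` {..<m}) = UNIV"
  shows "((\<exists>\<omega>. is_equilibrium_stress (n + m) (bip_edge n m) (bip_conf n p q) \<omega> \<and>
              psd_mat (n + m) (stress_matrix (n + m) \<omega>) \<and>
              vec_space.rank (n + m) (stress_matrix (n + m) \<omega>) = n + m - CARD('d) - 1)
          \<longrightarrow> super_stable (n + m) (bip_edge n m) (bip_conf n p q) \<and>
              universally_rigid (n + m) (bip_edge n m) (bip_conf n p q))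
       \<and> (dimensionally_rigid (n + m) (bip_edge n m) (bip_conf n p q)
          \<longrightarrow> universally_rigid (n + m) (bip_edge n m) (bip_conf n p q))"
proof (intro conjI impI)
  assume "\<exists>\<omega>. is_equilibrium_stress (n + m) (bip_edge n m) (bip_conf n p q) \<omega> \<and>
              psd_mat (n + m) (stress_matrix (n + m) \<omega>) \<and>
              vec_space.rank (n + m) (stress_matrix (n + m) \<omega>) = n + m - CARD('d) - 1"
  then obtain \<omega> where w: "is_equilibrium_stress (n + m) (bip_edge n m) (bip_conf n p q) \<omega>"
    "psd_mat (n + m) (stress_matrix (n + m) \<omega>)"
    "vec_space.rank (n + m) (stress_matrix (n + m) \<omega>) = n + m - CARD('d) - 1" by blast
  show "super_stable (n + m) (bip_edge n m) (bip_conf n p q)"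
    unfolding super_stable_def
    using bip_hull[OF assms(1)] w not_conic[OF assms] by blast
  show "universally_rigid (n + m) (bip_edge n m) (bip_conf n p q)"
    by (rule partA_UR[OF assms w])
next
  assume "dimensionally_rigid (n + m) (bip_edge n m) (bip_conf n p q)"
  thus "universally_rigid (n + m) (bip_edge n m) (bip_conf n p q)"
    by (rule partB[OF assms])
qed

end
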